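(* $\mathcal{FSTA}^{S}_{\mathcal{F.V.}} > \mathcal{FSTA}^{S}_{\mathcal{L.V.}}$, i.e. the model $\mathcal{FSTA}$ under the semi-synchronous scheduler with full visibility is computationally more powerful than the model $\mathcal{FSTA}$ under the semi-synchronous scheduler with limited visibility.
   Context: Robots are anonymous, identical, autonomous computational entities viewed as points moving in the Euclidean plane. Each has its own local coordinate system, with no agreement between robots and no common chirality, and perceives itself at its origin. Robots operate in Look-Compute-Move cycles. In Look a robot takes an instantaneous snapshot of the positions (and visible lights, if any) of the robots it can see. In Compute it runs the common algorithm on the snapshot to obtain a destination. In Move it moves there. Models: - $\mathcal{OBLOT}$: robots are oblivious (no memory of previous cycles) and silent (no means of communication). - $\mathcal{LUMI}$: each robot carries a persistent light whose color is taken from a finite set and is set at the end of Compute; the light is visible to the robot itself and to the other robots. - $\mathcal{FSTA}$: the light is internal, visible only to its owner. It acts as a finite persistent state; there is no communication. - $\mathcal{FCOM}$: the light is visible only to the other robots. A robot does not see its own light and is otherwise oblivious. Schedulers: time is divided into rounds. Under the semi-synchronous scheduler $S$ (SSYNCH), in each round an adversarially chosen set of robots is activated and they perform one full cycle in perfect synchronization; every robot is activated infinitely often. Under the fully synchronous scheduler $F$ (FSYNCH), every robot is activated in every round. Visibility: - Full visibility $\mathcal{F.V.}$: every robot sees all robots. - Limited visibility $\mathcal{L.V.}$: a robot sees only the robots within a fixed distance $V_r$ of its current position, with $V_r$ the same for all robots. The visibility graph (robots adjacent iff they see each other) of the initial configuration is assumed connected. Relations: $\mathcal{M}^X_V$ denotes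 model $\mathcal{M}$ under scheduler $X$ with visibility $V$. For a team $R$ of robots, $Task(\mathcal{M},X,V;R)$ is the set of problems (tasks where robots must form some configuration(s) subject to conditions) solvable by $R$ in that setting. $\mathcal{R}$ is the set of all teams, and $\mathcal{R}_n$ the set of teams of size $n$. - $\mathcal{M}^{X_1}_{V_1} \ge \mathcal{N}^{X_2}_{V_2}$ if for all $R\in\mathcal{R}$, $Task(\mathcal{M},X_1,V_1;R)\supseteq Task(\mathcal{N},X_2,V_2;R)$. - $>$ means $\ge$ holds and there exists $R\in\mathcal{R}$ with $Task(\mathcal{M},X_1,V_1;R)\setminus Task(\mathcal{N},X_2,V_2;R)\neq\emptyset$. - $\perp$ (incomparable) means there exist $R_1,R_2\in\mathcal{R}$ with $Task(\mathcal{M},X_1,V_1;R_1)\setminus Task(\mathcal{N},X_2,V_2;R_1)\neq\emptyset$ and $Task(\mathcal{N},X_2,V_2;R_2)\setminus Task(\mathcal{M},X_1,V_1;R_2)\neq\emptyset$. *)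

theory Defs
  imports Complex_Main
begin

text \<open>
  A team of n robots is indexed by 0..n-1 (indices are only for the global
  observer; robots are anonymous and never see indices).
  Model FSTA: each robot has a persistent internal state (its own light)
  from a finite set of colours, visible only to itself.
\<close>

text \<open>The robot is always at its own origin.
  Local frames disagree arbitrarily in orientation and chirality.\<close>

type_synonym frame = "complex \<times> bool"

definition to_local :: "frame \<Rightarrow> complex \<Rightarrow> complex" where
  "to_local F z = fst F * (if snd F then cnj z else z)"

definition to_global :: "frame \<Rightarrow> complex \<Rightarrow> complex" where
  "to_global F w = (let z = cnj (fst F) * w in if snd F then cnj z else z)"

datatype visibility = FullVis | LimitedVis

fun sees :: "visibility \<Rightarrow> real \<Rightarrow> complex \<Rightarrow> complex \<Rightarrow> bool" where
  "sees FullVis V x y = True"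
| "sees LimitedVis V x y = (cmod (y - x) \<le> V)"

datatype scheduler = SSYNCH | FSYNCH

text \<open>Admissible activation schedules: A t is the set of robots activated in round t.\<close>
fun admissible_schedule :: "scheduler \<Rightarrow> nat \<Rightarrow> (nat \<Rightarrow> nat set) \<Rightarrow> bool" where
  "admissible_schedule SSYNCH n A =
     ((\<forall>t. A t \<subseteq> {..<n}) \<and> (\<forall>i<n. \<forall>t. \<exists>t'\<ge>t. i \<in> A t'))"
| "admissible_schedule FSYNCH n A = (\<forall>t. A t = {..<n})"

text \<open>An FSTA algorithm: a finite set of internal colours C, the initial colour s0,
  and the Compute function mapping (own colour, snapshot in local coordinates) to
  (destination in local coordinates, new colour).\<close>

type_synonym algorithm = "nat set \<times> nat \<times> (nat \<Rightarrow> complex set \<Rightarrow> complex \<times> nat)"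

definition valid_algorithm :: "algorithm \<Rightarrow> bool" where
  "valid_algorithm alg = (case alg of (C, s0, f) \<Rightarrow>
     finite C \<and> s0 \<in> C \<and> (\<forall>s\<in>C. \<forall>S. snd (f s S) \<in> C))"

text \<open>Snapshot of robot i: positions (in its local frame, itself at the origin) of the
  robots it can see. Positions only; no lights of others are visible in FSTA.\<close>
definition snapshot ::
  "nat \<Rightarrow> visibility \<Rightarrow> real \<Rightarrow> (nat \<Rightarrow> frame) \<Rightarrow> (nat \<Rightarrow> complex) \<Rightarrow> nat \<Rightarrow> complex set" where
  "snapshot n vis V F p i =
     {to_local (F i) (p j - p i) | j. j < n \<and> sees vis V (p i) (p j)}"

text \<open>Execution: configuration (positions, internal colours) after t rounds.
  Activated robots perform a full Look-Compute-Move cycle synchronously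
  within the round and reach their destination.\<close>
primrec exec ::
  "nat \<Rightarrow> visibility \<Rightarrow> real \<Rightarrow> algorithm \<Rightarrow> (nat \<Rightarrow> complex) \<Rightarrow> (nat \<Rightarrow> nat set)
   \<Rightarrow> (nat \<Rightarrow> frame) \<Rightarrow> nat \<Rightarrow> (nat \<Rightarrow> complex) \<times> (nat \<Rightarrow> nat)" where
  "exec n vis V alg P0 A F 0 = (P0, (\<lambda>i. fst (snd alg)))"
| "exec n vis V alg P0 A F (Suc t) =
     (let (p, s) = exec n vis V alg P0 A F t;
          f = snd (snd alg);
          out = (\<lambda>i. f (s i) (snapshot n vis V F p i))
      in ((\<lambda>i. if i \<in> A t then p i + to_global (F i) (fst (out i)) else p i),
          (\<lambda>i. if i \<in> A t then snd (out i) else s i)))"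

text \<open>Admissible initial configurations for a team (n, V): n robots at distinct
  positions whose visibility graph (robots adjacent iff at distance \<le> V) is
  connected. Unused indices are set to 0.\<close>
definition valid_initial :: "nat \<Rightarrow> real \<Rightarrow> (nat \<Rightarrow> complex) \<Rightarrow> bool" where
  "valid_initial n V P0 =
     (inj_on P0 {..<n} \<and> (\<forall>i\<ge>n. P0 i = 0) \<and>
      (\<forall>i<n. \<forall>j<n. (\<lambda>a b. a < n \<and> b < n \<and> cmod (P0 a - P0 b) \<le> V)\<^sup>*\<^sup>* i j))"

definition valid_frames :: "nat \<Rightarrow> (nat \<Rightarrow> frame) \<Rightarrow> bool" where
  "valid_frames n F = (\<forall>i<n. cmod (fst (F i)) = 1)"

text \<open>A problem is a (temporal geometric) predicate on the evolution of the robots'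
  positions: trajectory t i = position of robot i after round t.\<close>
type_synonym problem = "(nat \<Rightarrow> nat \<Rightarrow> complex) \<Rightarrow> bool"

text \<open>A team is (n, V): n robots with common visibility radius V > 0.\<close>
type_synonym team = "nat \<times> real"

definition teams :: "team set" where
  "teams = {(n, V). 0 < n \<and> 0 < V}"

definition solves_FSTA ::
  "scheduler \<Rightarrow> visibility \<Rightarrow> team \<Rightarrow> algorithm \<Rightarrow> problem \<Rightarrow> bool" where
  "solves_FSTA X vis R alg P = (case R of (n, V) \<Rightarrow>
     (\<forall>P0 A F. valid_initial n V P0 \<and> admissible_schedule X n A \<and> valid_frames n F \<longrightarrow>
        P (\<lambda>t. fst (exec n vis V alg P0 A F t))))"

definition Task_FSTA :: "scheduler \<Rightarrow> visibility \<Rightarrow> team \<Rightarrow> problem set" where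
  "Task_FSTA X vis R = {P. \<exists>alg. valid_algorithm alg \<and> solves_FSTA X vis R alg P}"

definition model_ge :: "(team \<Rightarrow> problem set) \<Rightarrow> (team \<Rightarrow> problem set) \<Rightarrow> bool" where
  "model_ge T1 T2 = (\<forall>R\<in>teams. T2 R \<subseteq> T1 R)"

definition model_gt :: "(team \<Rightarrow> problem set) \<Rightarrow> (team \<Rightarrow> problem set) \<Rightarrow> bool" where
  "model_gt T1 T2 = (model_ge T1 T2 \<and> (\<exists>R\<in>teams. T1 R - T2 R \<noteq> {}))"

end

theory Submission
  imports Defs
begin

lemma cmod_le_iff: "0 \<le> c \<Longrightarrow> cmod z \<le> c \<longleftrightarrow> (Re z)^2 + (Im z)^2 \<le> c^2"
  by (metis cmod_power2 norm_ge_zero power2_le_iff_abs_le abs_of_nonneg)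
lemma cmod_gt_iff: "0 \<le> c \<Longrightarrow> c < cmod z \<longleftrightarrow> c^2 < (Re z)^2 + (Im z)^2"
  using cmod_le_iff[of c z] by linarith
lemma tl_diff: "cmod (fst F) = 1 \<Longrightarrow> cmod (to_local F a - to_local F b) = cmod (a - b)"
  by (cases F) (auto simp: to_local_def norm_mult simp flip: right_diff_distrib complex_cnj_diff)
lemma tl_norm: "cmod (fst F) = 1 \<Longrightarrow> cmod (to_local F a) = cmod a"
  by (cases F) (auto simp: to_local_def norm_mult)
lemma tg_norm: "cmod (fst F) = 1 \<Longrightarrow> cmod (to_global F a) = cmod a"
  by (cases F) (auto simp: to_global_def Let_def norm_mult)
lemma tg0: "to_global F 0 = 0" by (simp add: to_global_def Let_def)

lemma exec_Suc_fst: "fst (exec n vis V alg P0 A F (Suc t)) =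
  (\<lambda>i. if i \<in> A t then fst (exec n vis V alg P0 A F t) i + to_global (F i)
     (fst (snd (snd alg) (snd (exec n vis V alg P0 A F t) i) (snapshot n vis V F (fst (exec n vis V alg P0 A F t)) i)))
   else fst (exec n vis V alg P0 A F t) i)"
proof -
  obtain p s where e: "exec n vis V alg P0 A F t = (p, s)" by fastforce
  show ?thesis by (simp only: exec.simps e Let_def prod.case fst_conv snd_conv)
qed
lemma exec_Suc_snd: "snd (exec n vis V alg P0 A F (Suc t)) =
  (\<lambda>i. if i \<in> A t then
     snd (snd (snd alg) (snd (exec n vis V alg P0 A F t) i) (snapshot n vis V F (fst (exec n vis V alg P0 A F t)) i))
   else snd (exec n vis V alg P0 A F t) i)"
proof -
  obtain p s where e: "exec n vis V alg P0 A F t = (p, s)" by fastforce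
  show ?thesis by (simp only: exec.simps e Let_def prod.case fst_conv snd_conv)
qed

definition filt_alg :: "real \<Rightarrow> algorithm \<Rightarrow> algorithm" where
  "filt_alg V alg = (fst alg, fst (snd alg), \<lambda>s S. snd (snd alg) s {z\<in>S. cmod z \<le> V})"

lemma snap_filter:
  assumes "valid_frames n F" "i < n"
  shows "{z \<in> snapshot n FullVis V F p i. cmod z \<le> V} = snapshot n LimitedVis V F p i"
proof -
  have "cmod (fst (F i)) = 1" using assms by (simp add: valid_frames_def)
  then show ?thesis by (auto simp: snapshot_def tl_norm)
qed

lemma exec_filt:
  assumes "valid_frames n F" "\<forall>t. A t \<subseteq> {..<n}"
  shows "exec n FullVis V (filt_alg V alg) P0 A F t = exec n LimitedVis V alg P0 A F t"
proof (induction t)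
  case 0
  then show ?case by (simp add: filt_alg_def)
next
  case (Suc t)
  have snp: "\<And>i p. i \<in> A t \<Longrightarrow> {z \<in> snapshot n FullVis V F p i. cmod z \<le> V} = snapshot n LimitedVis V F p i"
    using snap_filter assms by blast
  have "fst (exec n FullVis V (filt_alg V alg) P0 A F (Suc t)) = fst (exec n LimitedVis V alg P0 A F (Suc t))"
    unfolding exec_Suc_fst Suc by (rule ext) (simp add: filt_alg_def snp)
  moreover have "snd (exec n FullVis V (filt_alg V alg) P0 A F (Suc t)) = snd (exec n LimitedVis V alg P0 A F (Suc t))"
    unfolding exec_Suc_snd Suc by (rule ext) (simp add: filt_alg_def snp)
  ultimately show ?case by (simp add: prod_eq_iff)
qed

lemma part1: "model_ge (Task_FSTA SSYNCH FullVis) (Task_FSTA SSYNCH LimitedVis)"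
  unfolding model_ge_def
proof (intro ballI subsetI)
  fix R P assume R: "R \<in> teams" and P: "P \<in> Task_FSTA SSYNCH LimitedVis R"
  obtain n V where Rn: "R = (n, V)" by (cases R)
  from P obtain alg where va: "valid_algorithm alg" and sa: "solves_FSTA SSYNCH LimitedVis R alg P"
    by (auto simp: Task_FSTA_def)
  have "valid_algorithm (filt_alg V alg)"
    using va by (auto simp: valid_algorithm_def filt_alg_def split: prod.splits)
  moreover have "solves_FSTA SSYNCH FullVis R (filt_alg V alg) P"
    unfolding solves_FSTA_def Rn prod.case
  proof (intro allI impI)
    fix P0 A F assume h: "valid_initial n V P0 \<and> admissible_schedule SSYNCH n A \<and> valid_frames n F"
    then have "P (\<lambda>t. fst (exec n LimitedVis V alg P0 A F t))"
      using sa by (auto simp: solves_FSTA_def Rn)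
    moreover have "(\<lambda>t. fst (exec n FullVis V (filt_alg V alg) P0 A F t)) = (\<lambda>t. fst (exec n LimitedVis V alg P0 A F t))"
      using exec_filt h by auto
    ultimately show "P (\<lambda>t. fst (exec n FullVis V (filt_alg V alg) P0 A F t))" by simp
  qed
  ultimately show "P \<in> Task_FSTA SSYNCH FullVis R" unfolding Task_FSTA_def by blast
qed

definition PA :: "nat \<Rightarrow> complex" where
  "PA i = (if i = 0 then Complex (-3) 4 else if i = 1 then 0 else if i = 2 then 5
     else if i = 3 then Complex 8 4 else 0)"
definition PB :: "nat \<Rightarrow> complex" where
  "PB i = (if i = 0 then Complex (-3) 4 else if i = 1 then 0 else if i = 2 then 5
     else if i = 3 then Complex 8 (-4) else 0)"

definition Psep :: problem where
  "Psep traj = (if \<exists>i<4. \<exists>j<4. 12 < cmod (traj 0 i - traj 0 j)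
     then (\<exists>t. traj t \<noteq> traj 0) else (\<forall>t. traj t = traj 0))"

definition algF :: algorithm where
  "algF = ({0}, 0, \<lambda>s S. (if \<exists>z\<in>S. \<exists>w\<in>S. 12 < cmod (z - w) then 1 else 0, 0))"

lemma less4: "(i::nat) < 4 \<longleftrightarrow> i = 0 \<or> i = 1 \<or> i = 2 \<or> i = 3" by auto

lemma chain4:
  assumes "R 0 1" "R 1 2" "R 2 3" "\<And>a b. R a b \<Longrightarrow> R b a" "i < (4::nat)" "j < 4"
  shows "R\<^sup>*\<^sup>* i j"
proof -
  have f: "R\<^sup>*\<^sup>* 0 k" if "k < 4" for k
    using that assms(1-3) unfolding less4
    by (metis (no_types, lifting) rtranclp.rtrancl_refl rtranclp.rtrancl_into_rtrancl)
  have b: "R\<^sup>*\<^sup>* k 0" if "k < 4" for k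
    using that assms(1-4) unfolding less4
    by (metis (no_types, lifting) rtranclp.rtrancl_refl converse_rtranclp_into_rtranclp)
  show ?thesis using f[OF assms(6)] b[OF assms(5)] by (rule rtranclp_trans[rotated])
qed

lemma bigsnap:
  assumes "valid_frames n F" "i < n"
  shows "(\<exists>z\<in>snapshot n FullVis V F p i. \<exists>w\<in>snapshot n FullVis V F p i. c < cmod (z - w))
    \<longleftrightarrow> (\<exists>j<n. \<exists>k<n. c < cmod (p j - p k))"
proof -
  have u: "cmod (fst (F i)) = 1" using assms by (simp add: valid_frames_def)
  have e: "cmod (to_local (F i) (p j - p i) - to_local (F i) (p k - p i)) = cmod (p j - p k)" for j k
    using tl_diff[OF u] by simp
  have "(\<exists>z\<in>snapshot n FullVis V F p i. \<exists>w\<in>snapshot n FullVis V F p i. c < cmod (z - w))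
    \<longleftrightarrow> (\<exists>j<n. \<exists>k<n. c < cmod (to_local (F i) (p j - p i) - to_local (F i) (p k - p i)))"
    unfolding snapshot_def by auto
  then show ?thesis by (simp only: e)
qed

lemma full_solves: "solves_FSTA SSYNCH FullVis (4, 5) algF Psep"
  unfolding solves_FSTA_def prod.case
proof (intro allI impI)
  fix P0 A F assume h: "valid_initial 4 5 P0 \<and> admissible_schedule SSYNCH 4 A \<and> valid_frames 4 F"
  then have vf: "valid_frames 4 F" and As: "\<forall>t. A t \<subseteq> {..<4}" and Ae: "\<forall>i<4. \<forall>t. \<exists>t'\<ge>t. i \<in> A t'"
    by auto
  let ?tr = "\<lambda>t. fst (exec 4 FullVis 5 algF P0 A F t)"
  have t0: "?tr 0 = P0" by simp
  show "Psep ?tr"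
  proof (cases "\<exists>i<4. \<exists>j<4. 12 < cmod (P0 i - P0 j)")
    case False
    have "?tr t = P0" for t
    proof (induction t)
      case 0 then show ?case by simp
    next
      case (Suc t)
      show ?case unfolding exec_Suc_fst Suc
      proof (rule ext)
        fix i
        show "(if i \<in> A t then P0 i + to_global (F i) (fst (snd (snd algF)
            (snd (exec 4 FullVis 5 algF P0 A F t) i) (snapshot 4 FullVis 5 F P0 i))) else P0 i) = P0 i"
        proof (cases "i \<in> A t")
          case True
          then have "i < 4" using As by auto
          then show ?thesis using bigsnap[OF vf, of i 5 P0 12] False by (simp add: algF_def tg0)
        qed simp
      qed
    qed
    then show ?thesis using False by (simp add: Psep_def)
  next
    case True
    have "\<exists>t. ?tr t \<noteq> ?tr 0"
    proof (rule ccontr)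
      assume "\<not> ?thesis"
      then have c: "\<And>t. ?tr t = P0" by simp
      obtain t where t: "0 \<in> A t" using Ae by fastforce
      have "?tr (Suc t) 0 = P0 0 + to_global (F 0) 1"
        unfolding exec_Suc_fst c using t bigsnap[OF vf, of 0 5 P0 12] True by (simp add: algF_def)
      then have "P0 0 + to_global (F 0) 1 = P0 0" using c[of "Suc t"] by metis
      then have "to_global (F 0) 1 = 0" by simp
      moreover have "cmod (to_global (F 0) 1) = 1" using tg_norm vf by (simp add: valid_frames_def)
      ultimately show False by simp
    qed
    then show ?thesis using True by (simp add: Psep_def)
  qed
qed

definition FA :: "nat \<Rightarrow> frame" where "FA i = (1, False)"
definition FB :: "nat \<Rightarrow> frame" where "FB i = (if i \<ge> 2 then (1, True) else (1, False))"

lemma vi_A: "valid_initial 4 5 PA"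
proof -
  have "inj_on PA {..<4}"
    unfolding inj_on_def lessThan_iff less4 by (auto simp: PA_def complex_eq_iff)
  moreover have "\<forall>i<4. \<forall>j<4. (\<lambda>a b. a < 4 \<and> b < 4 \<and> cmod (PA a - PA b) \<le> 5)\<^sup>*\<^sup>* i j"
    by (intro allI impI chain4) (auto simp: PA_def cmod_le_iff norm_minus_commute)
  ultimately show ?thesis by (simp add: valid_initial_def PA_def)
qed

lemma vi_B: "valid_initial 4 5 PB"
proof -
  have "inj_on PB {..<4}"
    unfolding inj_on_def lessThan_iff less4 by (auto simp: PB_def complex_eq_iff)
  moreover have "\<forall>i<4. \<forall>j<4. (\<lambda>a b. a < 4 \<and> b < 4 \<and> cmod (PB a - PB b) \<le> 5)\<^sup>*\<^sup>* i j"
    by (intro allI impI chain4) (auto simp: PB_def cmod_le_iff norm_minus_commute)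
  ultimately show ?thesis by (simp add: valid_initial_def PB_def)
qed

lemma snap_AB:
  assumes "i < 4"
  shows "snapshot 4 LimitedVis 5 FB PB i = snapshot 4 LimitedVis 5 FA PA i"
proof -
  have "(cmod (PB j - PB i) \<le> 5 \<longleftrightarrow> cmod (PA j - PA i) \<le> 5) \<and>
     (cmod (PA j - PA i) \<le> 5 \<longrightarrow> to_local (FB i) (PB j - PB i) = to_local (FA i) (PA j - PA i))" if j: "j < 4" for j
  proof -
    from assms j show ?thesis unfolding less4
      by (elim disjE) (simp_all add: PA_def PB_def FA_def FB_def to_local_def cmod_le_iff complex_eq_iff)
  qed
  then show ?thesis unfolding snapshot_def sees.simps by (metis (no_types, lifting))
qed

lemma not_limited: "Psep \<notin> Task_FSTA SSYNCH LimitedVis (4, 5)"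
proof
  assume "Psep \<in> Task_FSTA SSYNCH LimitedVis (4, 5)"
  then obtain alg where sa: "solves_FSTA SSYNCH LimitedVis (4, 5) alg Psep"
    by (auto simp: Task_FSTA_def)
  define Al where "Al = (\<lambda>t::nat. {..<4::nat})"
  have Al_iff: "\<And>i t. i \<in> Al t \<longleftrightarrow> i < 4" by (simp add: Al_def)
  have adm: "admissible_schedule SSYNCH 4 Al" by (auto simp: Al_def)
  have vfA: "valid_frames 4 FA" by (simp add: valid_frames_def FA_def)
  have vfB: "valid_frames 4 FB" by (simp add: valid_frames_def FB_def)
  let ?eA = "exec 4 LimitedVis 5 alg PA Al FA"
  let ?eB = "exec 4 LimitedVis 5 alg PB Al FB"
  have "Psep (\<lambda>t. fst (?eA t))" using sa vi_A adm vfA by (auto simp: solves_FSTA_def)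
  moreover have "\<not> (\<exists>i<4. \<exists>j<4. 12 < cmod (PA i - PA j))"
    unfolding less4 by (auto simp: PA_def cmod_gt_iff)
  ultimately have cA: "\<And>t. fst (?eA t) = PA" by (simp add: Psep_def)
  have "Psep (\<lambda>t. fst (?eB t))" using sa vi_B adm vfB by (auto simp: solves_FSTA_def)
  moreover have bigB: "\<exists>i<4. \<exists>j<4. 12 < cmod (PB i - PB j)"
    by (rule exI[of _ 3]) (auto intro!: exI[of _ 0] simp: PB_def cmod_gt_iff)
  ultimately obtain t where tB: "fst (?eB t) \<noteq> PB" by (auto simp: Psep_def)
  have "?eB t = (PB, snd (?eA t))" for t
  proof (induction t)
    case 0 then show ?case by simp
  next
    case (Suc t)
    have d0: "fst (snd (snd alg) (snd (?eA t) i) (snapshot 4 LimitedVis 5 FA PA i)) = 0" if i: "i < 4" for i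
    proof -
      have "fst (?eA (Suc t)) i = PA i" by (simp only: cA)
      then have "to_global (FA i) (fst (snd (snd alg) (snd (?eA t) i) (snapshot 4 LimitedVis 5 FA PA i))) = 0"
        unfolding exec_Suc_fst cA using i by (simp add: Al_iff)
      then show ?thesis by (simp add: FA_def to_global_def)
    qed
    have "fst (?eB (Suc t)) = PB"
      unfolding exec_Suc_fst Suc by (rule ext) (auto simp: Al_iff snap_AB d0 tg0)
    moreover have "snd (?eB (Suc t)) = snd (?eA (Suc t))"
      unfolding exec_Suc_snd Suc cA by (rule ext) (auto simp: Al_iff snap_AB)
    ultimately show ?case by (simp add: prod_eq_iff)
  qed
  then show False using tB by simp
qed

theorem theorem4:
  shows "model_gt (Task_FSTA SSYNCH FullVis) (Task_FSTA SSYNCH LimitedVis)"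
proof -
  have "(4::nat, 5::real) \<in> teams" by (simp add: teams_def)
  moreover have "Psep \<in> Task_FSTA SSYNCH FullVis (4, 5)"
  proof -
    have "valid_algorithm algF" by (simp add: valid_algorithm_def algF_def)
    then show ?thesis using full_solves unfolding Task_FSTA_def by blast
  qed
  ultimately show ?thesis unfolding model_gt_def using part1 not_limited by blast
qed

end
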